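(* Let $k$ be a field and $(\mathfrak{n},\{\,,\})$ a Lie algebra over $k$ which is a direct vector space sum $\mathfrak{n}=\mathfrak{a}\oplus\mathfrak{b}$ of two subalgebras $\mathfrak{a},\mathfrak{b}$. Define a bracket on the underlying space by $[a+b,a'+b']=\{a,a'\}-\{b,b'\}$ for $a,a'\in\mathfrak{a}$, $b,b'\in\mathfrak{b}$. Then $\mathfrak{g}=(\mathfrak{a}\oplus\mathfrak{b},[\,,])$ is a Lie algebra, and the product $(a+b)\cdot(a'+b')=-\{b,a'+b'\}$ is a post-Lie algebra structure on $(\mathfrak{g},\mathfrak{n})$.
   Context: A post-Lie algebra structure on a pair of Lie algebras $\mathfrak{g}=(V,[\,,])$, $\mathfrak{n}=(V,\{\,,\})$ on the same vector space $V$ is a bilinear product $x\cdot y$ on $V$ satisfying, for all $x,y,z\in V$: (1) $x\cdot y-y\cdot x=[x,y]-\{x,y\}$; (2) $[x,y]\cdot z=x\cdot(y\cdot z)-y\cdot(x\cdot z)$; (3) $x\cdot\{y,z\}=\{x\cdot y,z\}+\{y,x\cdot z\}$. *)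

theory Defs
  imports Complex_Main
begin

definition bilinear_map ::
  "('k::field \<Rightarrow> 'v::ab_group_add \<Rightarrow> 'v) \<Rightarrow> ('v \<Rightarrow> 'v \<Rightarrow> 'v) \<Rightarrow> bool" where
  "bilinear_map scale f \<longleftrightarrow>
     (\<forall>x y z. f (x + y) z = f x z + f y z) \<and>
     (\<forall>x y z. f x (y + z) = f x y + f x z) \<and>
     (\<forall>c x y. f (scale c x) y = scale c (f x y)) \<and>
     (\<forall>c x y. f x (scale c y) = scale c (f x y))"

definition lie_algebra ::
  "('k::field \<Rightarrow> 'v::ab_group_add \<Rightarrow> 'v) \<Rightarrow> ('v \<Rightarrow> 'v \<Rightarrow> 'v) \<Rightarrow> bool" where
  "lie_algebra scale br \<longleftrightarrow>
     vector_space scale \<and> bilinear_map scale br \<and>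
     (\<forall>x. br x x = 0) \<and>
     (\<forall>x y z. br x (br y z) + br y (br z x) + br z (br x y) = 0)"

definition lie_subalgebra ::
  "('k::field \<Rightarrow> 'v::ab_group_add \<Rightarrow> 'v) \<Rightarrow> ('v \<Rightarrow> 'v \<Rightarrow> 'v) \<Rightarrow> 'v set \<Rightarrow> bool" where
  "lie_subalgebra scale br S \<longleftrightarrow>
     module.subspace scale S \<and> (\<forall>x\<in>S. \<forall>y\<in>S. br x y \<in> S)"

definition direct_sum_decomp :: "'v::ab_group_add set \<Rightarrow> 'v set \<Rightarrow> bool" where
  "direct_sum_decomp A B \<longleftrightarrow> A \<inter> B = {0} \<and> (\<forall>v. \<exists>a\<in>A. \<exists>b\<in>B. v = a + b)"

text \<open>Post-Lie algebra structure on the pair (g, n) = ((V, G), (V, N)).\<close>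
definition post_lie_structure ::
  "('k::field \<Rightarrow> 'v::ab_group_add \<Rightarrow> 'v) \<Rightarrow> ('v \<Rightarrow> 'v \<Rightarrow> 'v) \<Rightarrow> ('v \<Rightarrow> 'v \<Rightarrow> 'v)
     \<Rightarrow> ('v \<Rightarrow> 'v \<Rightarrow> 'v) \<Rightarrow> bool" where
  "post_lie_structure scale G N P \<longleftrightarrow>
     lie_algebra scale G \<and> lie_algebra scale N \<and> bilinear_map scale P \<and>
     (\<forall>x y. P x y - P y x = G x y - N x y) \<and>
     (\<forall>x y z. P (G x y) z = P x (P y z) - P y (P x z)) \<and>
     (\<forall>x y z. P x (N y z) = N (P x y) z + N y (P x z))"

end

theory Submission
  imports Defs
begin

theorem proposition2p14:
  fixes scale :: "'k::field \<Rightarrow> 'v::ab_group_add \<Rightarrow> 'v"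
    and N G P :: "'v \<Rightarrow> 'v \<Rightarrow> 'v"
    and A B :: "'v set"
  assumes "lie_algebra scale N"
    and "lie_subalgebra scale N A"
    and "lie_subalgebra scale N B"
    and "direct_sum_decomp A B"
    and "\<And>a a' b b'. a \<in> A \<Longrightarrow> a' \<in> A \<Longrightarrow> b \<in> B \<Longrightarrow> b' \<in> B \<Longrightarrow>
           G (a + b) (a' + b') = N a a' - N b b'"
    and "\<And>a a' b b'. a \<in> A \<Longrightarrow> a' \<in> A \<Longrightarrow> b \<in> B \<Longrightarrow> b' \<in> B \<Longrightarrow>
           P (a + b) (a' + b') = - N b (a' + b')"
  shows "lie_algebra scale G \<and> post_lie_structure scale G N P"
proof -
  note LA = assms(1)[unfolded lie_algebra_def bilinear_map_def]
  interpret V: vector_space scale using LA by blast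
  have Nl: "N (x + y) z = N x z + N y z" for x y z using LA by blast
  have Nr: "N x (y + z) = N x y + N x z" for x y z using LA by blast
  have Nsl: "N (scale c x) y = scale c (N x y)" for c x y using LA by blast
  have Nsr: "N x (scale c y) = scale c (N x y)" for c x y using LA by blast
  have Nxx: "N x x = 0" for x using LA by blast
  have Jac: "N x (N y z) + N y (N z x) + N z (N x y) = 0" for x y z using LA by blast
  have Nr0: "N x 0 = 0" for x using Nr[of x 0 0] by simp
  have Nl0: "N 0 x = 0" for x using Nl[of 0 0 x] by simp
  have Nrm: "N x (- y) = - N x y" for x y using Nr[of x y "-y"] Nr0 by (simp add: eq_neg_iff_add_eq_0 add.commute)
  have Nlm: "N (- x) y = - N x y" for x y using Nl[of x "-x" y] Nl0 by (simp add: eq_neg_iff_add_eq_0 add.commute)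
  have anti: "N x y = - N y x" for x y
  proof -
    have "0 = N (x+y) (x+y)" by (simp add: Nxx)
    also have "\<dots> = N x y + N y x" unfolding Nl Nr by (simp add: Nxx)
    finally show ?thesis by (metis eq_neg_iff_add_eq_0)
  qed
  have SA: "V.subspace A" and cA: "\<And>x y. x \<in> A \<Longrightarrow> y \<in> A \<Longrightarrow> N x y \<in> A"
    using assms(2) unfolding lie_subalgebra_def by auto
  have SB: "V.subspace B" and cB: "\<And>x y. x \<in> B \<Longrightarrow> y \<in> B \<Longrightarrow> N x y \<in> B"
    using assms(3) unfolding lie_subalgebra_def by auto
  have AB0: "A \<inter> B = {0}" and dec: "\<And>v. \<exists>a\<in>A. \<exists>b\<in>B. v = a + b"
    using assms(4) unfolding direct_sum_decomp_def by auto
  have uniq: "a = a'" if "a \<in> A" "a' \<in> A" "b \<in> B" "b' \<in> B" "a + b = a' + b'" for a a' b b'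
  proof -
    have "a - a' = b' - b" using that(5) by (simp add: algebra_simps)
    moreover have "a - a' \<in> A" using V.subspace_diff[OF SA that(1,2)] .
    moreover have "b' - b \<in> B" using V.subspace_diff[OF SB that(4,3)] .
    ultimately have "a - a' \<in> A \<inter> B" by simp
    with AB0 show ?thesis by simp
  qed
  define pa where "pa v = (SOME a. a \<in> A \<and> (\<exists>b\<in>B. v = a + b))" for v
  define pb where "pb v = v - pa v" for v
  have pa: "pa v \<in> A \<and> (\<exists>b\<in>B. v = pa v + b)" for v
    unfolding pa_def by (rule someI_ex) (use dec in blast)
  have paA: "pa v \<in> A" and pbB: "pb v \<in> B" and vsum: "v = pa v + pb v" for v
  proof -
    obtain b where "pa v \<in> A" "b \<in> B" "v = pa v + b" using pa[of v] by blast
    then show "pa v \<in> A" "pb v \<in> B" "v = pa v + pb v" unfolding pb_def by (metis add_diff_cancel_left')+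
  qed
  have pa_eq: "pa (a + b) = a" if "a \<in> A" "b \<in> B" for a b
  proof -
    have "pa (a+b) + pb (a+b) = a + b" by (rule vsum[symmetric])
    then show ?thesis using uniq[OF paA that(1) pbB that(2)] by blast
  qed
  have pb_eq: "pb (a + b) = b" if "a \<in> A" "b \<in> B" for a b
    using pa_eq[OF that] unfolding pb_def by simp
  have Gd: "G x y = N (pa x) (pa y) - N (pb x) (pb y)" for x y
  proof -
    have "G x y = G (pa x + pb x) (pa y + pb y)" by (rule arg_cong2[OF vsum vsum])
    also have "\<dots> = N (pa x) (pa y) - N (pb x) (pb y)" by (rule assms(5)[OF paA paA pbB pbB])
    finally show ?thesis .
  qed
  have Pd: "P x y = - N (pb x) y" for x y
  proof -
    have "P x y = P (pa x + pb x) (pa y + pb y)" by (rule arg_cong2[OF vsum vsum])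
    also have "\<dots> = - N (pb x) (pa y + pb y)" by (rule assms(6)[OF paA paA pbB pbB])
    also have "pa y + pb y = y" by (rule vsum[symmetric])
    finally show ?thesis .
  qed
  have paadd: "pa (x + y) = pa x + pa y" and pbadd: "pb (x + y) = pb x + pb y" for x y
  proof -
    have "x + y = (pa x + pa y) + (pb x + pb y)" using vsum[of x] vsum[of y] by (simp add: algebra_simps)
    moreover have "pa x + pa y \<in> A" by (rule V.subspace_add[OF SA paA paA])
    moreover have "pb x + pb y \<in> B" by (rule V.subspace_add[OF SB pbB pbB])
    ultimately show "pa (x + y) = pa x + pa y" "pb (x + y) = pb x + pb y"
      using pa_eq pb_eq by simp_all
  qed
  have pasc: "pa (scale c x) = scale c (pa x)" and pbsc: "pb (scale c x) = scale c (pb x)" for c x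
  proof -
    have "scale c x = scale c (pa x) + scale c (pb x)"
      using arg_cong[OF vsum[of x], of "scale c"] V.scale_right_distrib by simp
    moreover have "scale c (pa x) \<in> A" by (rule V.subspace_scale[OF SA paA])
    moreover have "scale c (pb x) \<in> B" by (rule V.subspace_scale[OF SB pbB])
    ultimately show "pa (scale c x) = scale c (pa x)" "pb (scale c x) = scale c (pb x)"
      using pa_eq pb_eq by simp_all
  qed
  have paG: "pa (G x y) = N (pa x) (pa y)" and pbG: "pb (G x y) = - N (pb x) (pb y)" for x y
  proof -
    have e: "G x y = N (pa x) (pa y) + (- N (pb x) (pb y))" using Gd by simp
    have nb: "- N (pb x) (pb y) \<in> B" by (rule V.subspace_neg[OF SB cB[OF pbB pbB]])
    show "pa (G x y) = N (pa x) (pa y)" "pb (G x y) = - N (pb x) (pb y)"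
      unfolding e by (rule pa_eq[OF cA[OF paA paA] nb], rule pb_eq[OF cA[OF paA paA] nb])
  qed
  have bilG: "bilinear_map scale G"
    unfolding bilinear_map_def Gd
    by (simp add: paadd pbadd pasc pbsc Nl Nr Nsl Nsr V.scale_right_diff_distrib algebra_simps)
  have Jb: "N x (N y z) = N (N x y) z + N y (N x z)" for x y z
  proof -
    have "N x (N y z) + N y (N z x) + N z (N x y) = 0" by (rule Jac)
    moreover have "N y (N z x) = - N y (N x z)" unfolding anti[of z x] Nrm ..
    moreover have "N z (N x y) = - N (N x y) z" by (rule anti)
    ultimately show ?thesis by (simp add: algebra_simps eq_neg_iff_add_eq_0)
  qed
  have lieG: "lie_algebra scale G"
    unfolding lie_algebra_def
  proof (intro conjI allI)
    show "vector_space scale" using LA by blast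
    show "bilinear_map scale G" by (rule bilG)
    show "G x x = 0" for x by (simp add: Gd Nxx)
    show "G x (G y z) + G y (G z x) + G z (G x y) = 0" for x y z
    proof -
      have e: "G u (G v w) = N (pa u) (N (pa v) (pa w)) + N (pb u) (N (pb v) (pb w))" for u v w
        by (simp add: Gd[of u] paG pbG Nrm)
      have "N (pa x) (N (pa y) (pa z)) + N (pa y) (N (pa z) (pa x)) + N (pa z) (N (pa x) (pa y)) = 0"
        by (rule Jac)
      moreover have "N (pb x) (N (pb y) (pb z)) + N (pb y) (N (pb z) (pb x)) + N (pb z) (N (pb x) (pb y)) = 0"
        by (rule Jac)
      ultimately show ?thesis unfolding e by (simp add: algebra_simps)
    qed
  qed
  have bilP: "bilinear_map scale P"
    unfolding bilinear_map_def Pd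
    by (simp add: pbadd pbsc Nl Nr Nsl Nsr Nlm Nrm algebra_simps)
  have p1: "P x y - P y x = G x y - N x y" for x y
  proof -
    have "N x y = N (pa x) (pa y) + N (pa x) (pb y) + N (pb x) (pa y) + N (pb x) (pb y)"
    proof -
      have "N x y = N (pa x + pb x) (pa y + pb y)" by (rule arg_cong2[OF vsum vsum])
      then show ?thesis unfolding Nl Nr by (simp add: add.assoc)
    qed
    moreover have "N (pb x) y = N (pb x) (pa y) + N (pb x) (pb y)"
      using arg_cong[OF vsum[of y], of "N (pb x)"] unfolding Nr .
    moreover have "N (pb y) x = N (pb y) (pa x) + N (pb y) (pb x)"
      using arg_cong[OF vsum[of x], of "N (pb y)"] unfolding Nr .
    moreover have "N (pb y) (pa x) = - N (pa x) (pb y)" by (rule anti)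
    moreover have "N (pb y) (pb x) = - N (pb x) (pb y)" by (rule anti)
    ultimately show ?thesis by (simp add: Pd Gd algebra_simps)
  qed
  have p2: "P (G x y) z = P x (P y z) - P y (P x z)" for x y z
    using Jb[of "pb x" "pb y" z] by (simp add: Pd pbG Nlm Nrm algebra_simps)
  have p3: "P x (N y z) = N (P x y) z + N y (P x z)" for x y z
    using Jb[of "pb x" y z] by (simp add: Pd Nlm Nrm algebra_simps)
  show ?thesis
    unfolding post_lie_structure_def using lieG assms(1) bilP p1 p2 p3 by blast
qed

end
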